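(* Let $\{r_i\}_{i=1}^\infty$ be symmetric independent real random variables with $\|r_i\|_\infty=1$ for all $i$. Let $X$ be a real Banach space and $n\ge2$. The following are equivalent: (1) $\ell_\infty^n$ is not representable in $X$. (2) There exists $\rho>0$ such that whenever $x_1,\ldots,x_n$ are unit vectors in $X$, there exist signs $\epsilon_1,\ldots,\epsilon_n\in\{\pm1\}$ with $\|\epsilon_1x_1+\cdots+\epsilon_nx_n\|\ge1+\rho$. (3) There exist a strictly convex increasing function $\varphi$ on $[0,\infty)$ with $\varphi(0)=0$ and $\rho>0$ such that whenever $x_1,\ldots,x_n$ are unit vectors in $X$, $\mathbb{E}[\varphi(\|x_1+r_2x_2+\cdots+r_nx_n\|)]\ge\varphi(1)+\rho$. (4) For each strictly convex increasing function $\varphi$ on $[0,\infty)$ with $\varphi(0)=0$ there is $\rho>0$ such that whenever $x_1,\ldots,x_n$ are unit vectors in $X$, $\mathbb{E}[\varphi(\|x_1+r_2x_2+\cdots+r_nx_n\|)]\ge\varphi(1)+\rho$.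
   Context: $\ell_\infty^n$ is $\mathbb{R}^n$ with the maximum norm. A Banach space $Y$ is representable in $X$ if for each $\lambda>1$ there is a bounded linear map $T:Y\to X$ with $\|y\|\le\|Ty\|\le\lambda\|y\|$ for all $y\in Y$. A convex function $\varphi$ on $[0,\infty)$ is strictly convex if $\varphi(\frac{s+t}{2})<\frac{\varphi(s)+\varphi(t)}{2}$ for all distinct $s,t\ge 0$. A random variable $r$ is symmetric if $r$ and $-r$ have the same distribution; $\|r\|_\infty$ is its essential supremum norm. *)

theory Defs
  imports "HOL-Analysis.Analysis" "HOL-Probability.Probability"
begin

definition linf_norm :: "nat \<Rightarrow> (nat \<Rightarrow> real) \<Rightarrow> real" where
  "linf_norm n y = Max ((\<lambda>i. \<bar>y i\<bar>) ` {1..n})"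

text \<open>Carrier of ell_infinity^n: real functions supported on {1..n}.\<close>
definition linf_space :: "nat \<Rightarrow> (nat \<Rightarrow> real) set" where
  "linf_space n = {y. \<forall>i. i \<notin> {1..n} \<longrightarrow> y i = 0}"

definition linf_representable :: "nat \<Rightarrow> 'a::real_normed_vector itself \<Rightarrow> bool" where
  "linf_representable n X \<longleftrightarrow>
     (\<forall>lam>1. \<exists>T :: (nat \<Rightarrow> real) \<Rightarrow> 'a.
        (\<forall>y\<in>linf_space n. \<forall>z\<in>linf_space n. T (\<lambda>i. y i + z i) = T y + T z) \<and>
        (\<forall>y\<in>linf_space n. \<forall>c. T (\<lambda>i. c * y i) = c *\<^sub>R T y) \<and>
        (\<exists>K. \<forall>y\<in>linf_space n. norm (T y) \<le> K * linf_norm n y) \<and>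
        (\<forall>y\<in>linf_space n. linf_norm n y \<le> norm (T y) \<and> norm (T y) \<le> lam * linf_norm n y))"

definition admissible_phi :: "(real \<Rightarrow> real) \<Rightarrow> bool" where
  "admissible_phi \<phi> \<longleftrightarrow>
     convex_on {0..} \<phi> \<and>
     (\<forall>s\<ge>0. \<forall>t\<ge>0. s \<noteq> t \<longrightarrow> \<phi> ((s + t) / 2) < (\<phi> s + \<phi> t) / 2) \<and>
     mono_on {0..} \<phi> \<and> \<phi> 0 = 0"

end

theory Submission
  imports Defs
begin

lemma cube_bound:
  fixes x :: "nat \<Rightarrow> 'a::real_normed_vector"
  assumes "finite S"
    and "\<forall>\<epsilon>. (\<forall>i\<in>S. \<epsilon> i = 1 \<or> \<epsilon> i = -1) \<longrightarrow> norm (a + (\<Sum>i\<in>S. \<epsilon> i *\<^sub>R x i)) \<le> B"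
    and "\<forall>i\<in>S. \<bar>t i\<bar> \<le> 1"
  shows "norm (a + (\<Sum>i\<in>S. t i *\<^sub>R x i)) \<le> B"
  using assms
proof (induction S arbitrary: a rule: finite_induct)
  case empty
  then show ?case by simp
next
  case (insert j S)
  have h1: "norm ((a + x j) + (\<Sum>i\<in>S. t i *\<^sub>R x i)) \<le> B"
  proof (rule insert.IH)
    show "\<forall>\<epsilon>. (\<forall>i\<in>S. \<epsilon> i = 1 \<or> \<epsilon> i = -1) \<longrightarrow> norm ((a + x j) + (\<Sum>i\<in>S. \<epsilon> i *\<^sub>R x i)) \<le> B"
    proof (intro allI impI)
      fix \<epsilon> :: "nat \<Rightarrow> real" assume e: "\<forall>i\<in>S. \<epsilon> i = 1 \<or> \<epsilon> i = -1"
      have E1: "(\<Sum>i\<in>insert j S. (\<epsilon>(j:=1)) i *\<^sub>R x i) = x j + (\<Sum>i\<in>S. \<epsilon> i *\<^sub>R x i)"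
        using insert.hyps by (auto intro!: sum.cong)
      have E2: "norm (a + (\<Sum>i\<in>insert j S. (\<epsilon>(j:=1)) i *\<^sub>R x i)) \<le> B"
        using insert.prems(1) e by auto
      show "norm ((a + x j) + (\<Sum>i\<in>S. \<epsilon> i *\<^sub>R x i)) \<le> B" using E2 unfolding E1 by (simp add: add.assoc)
    qed
  qed (use insert.prems in auto)
  have h2: "norm ((a - x j) + (\<Sum>i\<in>S. t i *\<^sub>R x i)) \<le> B"
  proof (rule insert.IH)
    show "\<forall>\<epsilon>. (\<forall>i\<in>S. \<epsilon> i = 1 \<or> \<epsilon> i = -1) \<longrightarrow> norm ((a - x j) + (\<Sum>i\<in>S. \<epsilon> i *\<^sub>R x i)) \<le> B"
    proof (intro allI impI)
      fix \<epsilon> :: "nat \<Rightarrow> real" assume e: "\<forall>i\<in>S. \<epsilon> i = 1 \<or> \<epsilon> i = -1"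
      have E1: "(\<Sum>i\<in>insert j S. (\<epsilon>(j:=-1)) i *\<^sub>R x i) = - x j + (\<Sum>i\<in>S. \<epsilon> i *\<^sub>R x i)"
        using insert.hyps by (auto intro!: sum.cong)
      have E2: "norm (a + (\<Sum>i\<in>insert j S. (\<epsilon>(j:=-1)) i *\<^sub>R x i)) \<le> B"
        using insert.prems(1) e by auto
      show "norm ((a - x j) + (\<Sum>i\<in>S. \<epsilon> i *\<^sub>R x i)) \<le> B" using E2 unfolding E1 by (simp add: algebra_simps)
    qed
  qed (use insert.prems in auto)
  define s where "s = (\<Sum>i\<in>S. t i *\<^sub>R x i)"
  have tj: "\<bar>t j\<bar> \<le> 1" using insert.prems by auto
  have eq: "a + (\<Sum>i\<in>insert j S. t i *\<^sub>R x i) =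
      ((1 + t j)/2) *\<^sub>R ((a + x j) + s) + ((1 - t j)/2) *\<^sub>R ((a - x j) + s)"
  proof -
    have "((1 + t j)/2) *\<^sub>R ((a + x j) + s) + ((1 - t j)/2) *\<^sub>R ((a - x j) + s)
       = (((1 + t j)/2) + ((1 - t j)/2)) *\<^sub>R (a + s) + (((1 + t j)/2) - ((1 - t j)/2)) *\<^sub>R x j"
      by (simp add: algebra_simps)
    also have "\<dots> = a + s + t j *\<^sub>R x j"
    proof -
      have "((1 + t j)/2) + ((1 - t j)/2) = 1" "((1 + t j)/2) - ((1 - t j)/2) = t j" by (simp_all add: field_simps)
      then show ?thesis by simp
    qed
    finally show ?thesis using insert.hyps by (simp add: s_def algebra_simps)
  qed
  have "norm (((1 + t j)/2) *\<^sub>R ((a + x j) + s) + ((1 - t j)/2) *\<^sub>R ((a - x j) + s))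
      \<le> ((1 + t j)/2) * norm ((a + x j) + s) + ((1 - t j)/2) * norm ((a - x j) + s)"
    using tj by (intro order_trans[OF norm_triangle_ineq]) (simp add: abs_of_nonneg)
  also have "\<dots> \<le> ((1 + t j)/2) * B + ((1 - t j)/2) * B"
    using tj h1 h2 unfolding s_def by (intro add_mono mult_left_mono) auto
  also have "\<dots> = B" by (simp add: field_simps)
  finally show ?case using eq by simp
qed


lemma linf_norm_facts:
  assumes "n \<ge> 1"
  shows "\<And>i. i \<in> {1..n} \<Longrightarrow> \<bar>y i\<bar> \<le> linf_norm n y"
    and "\<exists>j\<in>{1..n}. \<bar>y j\<bar> = linf_norm n y"
    and "linf_norm n y \<ge> 0"
proof -
  have ne: "(\<lambda>i. \<bar>y i\<bar>) ` {1..n} \<noteq> {}" using assms by auto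
  show "\<And>i. i \<in> {1..n} \<Longrightarrow> \<bar>y i\<bar> \<le> linf_norm n y"
    unfolding linf_norm_def by (rule Max_ge) auto
  show ex: "\<exists>j\<in>{1..n}. \<bar>y j\<bar> = linf_norm n y"
    using Max_in[OF _ ne] unfolding linf_norm_def by force
  then show "linf_norm n y \<ge> 0" by force
qed

lemma sum_upper:
  fixes x :: "nat \<Rightarrow> 'a::real_normed_vector"
  assumes "n \<ge> 1"
    and H: "\<forall>\<epsilon>. (\<forall>i\<in>{1..n}. \<epsilon> i = 1 \<or> \<epsilon> i = -1) \<longrightarrow> norm (\<Sum>i=1..n. \<epsilon> i *\<^sub>R x i) \<le> B"
  shows "norm (\<Sum>i=1..n. y i *\<^sub>R x i) \<le> B * linf_norm n y"
proof -
  define M where "M = linf_norm n y"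
  have ge: "\<And>i. i \<in> {1..n} \<Longrightarrow> \<bar>y i\<bar> \<le> M" and M0: "M \<ge> 0"
    using linf_norm_facts[OF assms(1)] unfolding M_def by auto
  show ?thesis
  proof (cases "M = 0")
    case True
    then have "\<And>i. i \<in> {1..n} \<Longrightarrow> y i = 0" using ge by force
    then have "(\<Sum>i=1..n. y i *\<^sub>R x i) = 0" by (intro sum.neutral) auto
    then show ?thesis using True M_def by simp
  next
    case False
    then have Mp: "M > 0" using M0 by simp
    define t where "t i = y i / M" for i
    have "norm (0 + (\<Sum>i\<in>{1..n}. t i *\<^sub>R x i)) \<le> B"
      by (rule cube_bound) (use H ge Mp in \<open>auto simp: t_def abs_divide\<close>)
    moreover have "(\<Sum>i=1..n. y i *\<^sub>R x i) = M *\<^sub>R (\<Sum>i\<in>{1..n}. t i *\<^sub>R x i)"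
      using Mp by (simp add: t_def scaleR_sum_right)
    ultimately show ?thesis using Mp by (simp add: M_def[symmetric] mult.commute)
  qed
qed

lemma sum_lower:
  fixes x :: "nat \<Rightarrow> 'a::real_normed_vector"
  assumes "n \<ge> 1" and unit: "\<forall>i\<in>{1..n}. norm (x i) = 1"
    and H: "\<forall>\<epsilon>. (\<forall>i\<in>{1..n}. \<epsilon> i = 1 \<or> \<epsilon> i = -1) \<longrightarrow> norm (\<Sum>i=1..n. \<epsilon> i *\<^sub>R x i) \<le> B"
  shows "(2 - B) * linf_norm n y \<le> norm (\<Sum>i=1..n. y i *\<^sub>R x i)"
proof -
  define M where "M = linf_norm n y"
  obtain j where j: "j \<in> {1..n}" "\<bar>y j\<bar> = M"
    using linf_norm_facts(2)[OF assms(1), of y] unfolding M_def by auto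
  define z where "z i = (if i = j then y i else - y i)" for i
  have zn: "linf_norm n z = M"
  proof -
    have "(\<lambda>i. \<bar>z i\<bar>) ` {1..n} = (\<lambda>i. \<bar>y i\<bar>) ` {1..n}"
      by (intro image_cong) (auto simp: z_def)
    then show ?thesis unfolding linf_norm_def M_def by simp
  qed
  have up: "norm (\<Sum>i=1..n. z i *\<^sub>R x i) \<le> B * M"
    using sum_upper[OF assms(1) H, of z] zn by simp
  define S where "S = (\<Sum>i=1..n. y i *\<^sub>R x i)"
  have pt: "z i *\<^sub>R x i = (- (y i *\<^sub>R x i)) + (if i = j then (2 * y i) *\<^sub>R x i else 0)" for i
  proof (cases "i = j")
    case True
    have "(2 * y i) *\<^sub>R x i = y i *\<^sub>R x i + y i *\<^sub>R x i"
      by (simp add: scaleR_left_distrib[symmetric])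
    then show ?thesis using True by (simp add: z_def)
  next
    case False
    then show ?thesis by (simp add: z_def)
  qed
  have "(\<Sum>i=1..n. z i *\<^sub>R x i) = (\<Sum>i=1..n. (- (y i *\<^sub>R x i)) + (if i = j then (2 * y i) *\<^sub>R x i else 0))"
    by (rule sum.cong[OF refl pt])
  also have "\<dots> = (\<Sum>i=1..n. - (y i *\<^sub>R x i)) + (\<Sum>i=1..n. (if i = j then (2 * y i) *\<^sub>R x i else 0))"
    by (rule sum.distrib)
  also have "(\<Sum>i=1..n. (if i = j then (2 * y i) *\<^sub>R x i else 0)) = (2 * y j) *\<^sub>R x j"
    using j(1) by (subst sum.delta) auto
  also have "(\<Sum>i=1..n. - (y i *\<^sub>R x i)) = - S"
    unfolding S_def by (rule sum_negf)
  finally have zs: "(\<Sum>i=1..n. z i *\<^sub>R x i) = - S + (2 * y j) *\<^sub>R x j" .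
  have "2 * M = norm ((2 * y j) *\<^sub>R x j)" using unit j by simp
  also have "(2 * y j) *\<^sub>R x j = S + (- S + (2 * y j) *\<^sub>R x j)" by simp
  also have "norm \<dots> \<le> norm S + norm (- S + (2 * y j) *\<^sub>R x j)" by (rule norm_triangle_ineq)
  finally have "2 * M \<le> norm S + B * M" using up zs by simp
  then show ?thesis unfolding S_def M_def by (simp add: algebra_simps)
qed


lemma repr_of_notP2:
  assumes n1: "n \<ge> 1"
    and H: "\<forall>\<rho>>0. \<exists>x::nat\<Rightarrow>'a::real_normed_vector. (\<forall>i\<in>{1..n}. norm (x i) = 1) \<and>
       (\<forall>\<epsilon>. (\<forall>i\<in>{1..n}. \<epsilon> i = 1 \<or> \<epsilon> i = -1) \<longrightarrow> norm (\<Sum>i=1..n. \<epsilon> i *\<^sub>R x i) < 1 + \<rho>)"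
  shows "linf_representable n TYPE('a)"
  unfolding linf_representable_def
proof (intro allI impI)
  fix lam :: real assume lam: "lam > 1"
  define \<rho> where "\<rho> = (lam - 1) / (lam + 1)"
  have \<rho>0: "\<rho> > 0" and \<rho>1: "\<rho> < 1" using lam by (auto simp: \<rho>_def field_simps)
  have lamq: "(1 + \<rho>) / (1 - \<rho>) = lam" using lam by (simp add: \<rho>_def field_simps)
  obtain x :: "nat \<Rightarrow> 'a" where unit: "\<forall>i\<in>{1..n}. norm (x i) = 1"
    and Hx: "\<forall>\<epsilon>. (\<forall>i\<in>{1..n}. \<epsilon> i = 1 \<or> \<epsilon> i = -1) \<longrightarrow> norm (\<Sum>i=1..n. \<epsilon> i *\<^sub>R x i) < 1 + \<rho>"
    using H \<rho>0 by blast
  have Hx': "\<forall>\<epsilon>. (\<forall>i\<in>{1..n}. \<epsilon> i = 1 \<or> \<epsilon> i = -1) \<longrightarrow> norm (\<Sum>i=1..n. \<epsilon> i *\<^sub>R x i) \<le> 1 + \<rho>"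
    using Hx by (simp add: less_imp_le)
  define T where "T y = (1 / (1 - \<rho>)) *\<^sub>R (\<Sum>i=1..n. y i *\<^sub>R x i)" for y
  have up: "norm (T y) \<le> lam * linf_norm n y" for y
  proof -
    have "norm (T y) = norm (\<Sum>i=1..n. y i *\<^sub>R x i) / (1 - \<rho>)" using \<rho>1 by (simp add: T_def)
    also have "\<dots> \<le> ((1 + \<rho>) * linf_norm n y) / (1 - \<rho>)"
      using sum_upper[OF n1 Hx', of y] \<rho>1 by (intro divide_right_mono) auto
    also have "\<dots> = ((1 + \<rho>) / (1 - \<rho>)) * linf_norm n y" by simp
    also have "\<dots> = lam * linf_norm n y" using lamq by simp
    finally show ?thesis .
  qed
  have lo: "linf_norm n y \<le> norm (T y)" for y
  proof -
    have "(2 - (1 + \<rho>)) * linf_norm n y \<le> norm (\<Sum>i=1..n. y i *\<^sub>R x i)"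
      by (rule sum_lower[OF n1 unit Hx'])
    then have "linf_norm n y \<le> norm (\<Sum>i=1..n. y i *\<^sub>R x i) / (1 - \<rho>)"
      using \<rho>1 by (simp add: field_simps)
    then show ?thesis using \<rho>1 by (simp add: T_def)
  qed
  show "\<exists>T :: (nat \<Rightarrow> real) \<Rightarrow> 'a.
        (\<forall>y\<in>linf_space n. \<forall>z\<in>linf_space n. T (\<lambda>i. y i + z i) = T y + T z) \<and>
        (\<forall>y\<in>linf_space n. \<forall>c. T (\<lambda>i. c * y i) = c *\<^sub>R T y) \<and>
        (\<exists>K. \<forall>y\<in>linf_space n. norm (T y) \<le> K * linf_norm n y) \<and>
        (\<forall>y\<in>linf_space n. linf_norm n y \<le> norm (T y) \<and> norm (T y) \<le> lam * linf_norm n y)"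
  proof (intro exI[of _ T] conjI ballI allI)
    fix y z :: "nat \<Rightarrow> real"
    show "T (\<lambda>i. y i + z i) = T y + T z"
      by (simp add: T_def scaleR_add_left sum.distrib scaleR_add_right)
  next
    fix y :: "nat \<Rightarrow> real" and c :: real
    show "T (\<lambda>i. c * y i) = c *\<^sub>R T y"
      by (simp add: T_def scaleR_sum_right)
  next
    show "\<exists>K. \<forall>y\<in>linf_space n. norm (T y) \<le> K * linf_norm n y" using up by blast
  qed (use up lo in auto)
qed


lemma notP2_of_repr:
  assumes n1: "n \<ge> 1" and R: "linf_representable n TYPE('a::real_normed_vector)" and \<rho>0: "\<rho> > 0"
  shows "\<exists>x::nat\<Rightarrow>'a. (\<forall>i\<in>{1..n}. norm (x i) = 1) \<and>
       (\<forall>\<epsilon>. (\<forall>i\<in>{1..n}. \<epsilon> i = 1 \<or> \<epsilon> i = -1) \<longrightarrow> norm (\<Sum>i=1..n. \<epsilon> i *\<^sub>R x i) < 1 + \<rho>)"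
proof -
  define lam where "lam = 1 + \<rho> / 2"
  have "lam > 1" using \<rho>0 by (simp add: lam_def)
  then obtain T :: "(nat \<Rightarrow> real) \<Rightarrow> 'a" where
    add: "\<forall>y\<in>linf_space n. \<forall>z\<in>linf_space n. T (\<lambda>i. y i + z i) = T y + T z" and
    hom: "\<forall>y\<in>linf_space n. \<forall>c. T (\<lambda>i. c * y i) = c *\<^sub>R T y" and
    bd: "\<forall>y\<in>linf_space n. linf_norm n y \<le> norm (T y) \<and> norm (T y) \<le> lam * linf_norm n y"
    using R unfolding linf_representable_def by blast
  have sp_add: "(\<lambda>k. y k + z k) \<in> linf_space n" if "y \<in> linf_space n" "z \<in> linf_space n" for y z
    using that by (auto simp: linf_space_def)
  have sp_mul: "(\<lambda>k. c * y k) \<in> linf_space n" if "y \<in> linf_space n" for y c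
    using that by (auto simp: linf_space_def)
  have zero_sp: "(\<lambda>k. 0::real) \<in> linf_space n" by (auto simp: linf_space_def)
  have T0: "T (\<lambda>k. 0) = 0"
  proof -
    show ?thesis using hom[rule_format, OF zero_sp, of 0] by simp
  qed
  have Tsum: "finite S \<Longrightarrow> (\<forall>i\<in>S. f i \<in> linf_space n) \<Longrightarrow>
      (\<lambda>k. \<Sum>i\<in>S. f i k) \<in> linf_space n \<and> T (\<lambda>k. \<Sum>i\<in>S. f i k) = (\<Sum>i\<in>S. T (f i))" for S f
  proof (induction S rule: finite_induct)
    case empty then show ?case using T0 zero_sp by simp
  next
    case (insert a S)
    then have IH: "(\<lambda>k. \<Sum>i\<in>S. f i k) \<in> linf_space n" "T (\<lambda>k. \<Sum>i\<in>S. f i k) = (\<Sum>i\<in>S. T (f i))"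
      and fa: "f a \<in> linf_space n" by auto
    have eq: "(\<lambda>k. \<Sum>i\<in>insert a S. f i k) = (\<lambda>k. f a k + (\<Sum>i\<in>S. f i k))"
      using insert.hyps by simp
    show ?case unfolding eq using sp_add[OF fa IH(1)] add fa IH insert.hyps by simp
  qed
  define e where "e i = (\<lambda>k::nat. if k = i then 1 else (0::real))" for i :: nat
  have e_sp: "e i \<in> linf_space n" if "i \<in> {1..n}" for i
    using that by (auto simp: e_def linf_space_def)
  have e_norm: "linf_norm n (e i) = 1" if "i \<in> {1..n}" for i
    unfolding linf_norm_def
  proof (rule Max_eqI)
    show "(1::real) \<in> (\<lambda>k. \<bar>e i k\<bar>) ` {1..n}" using that by (force simp: e_def)
  qed (auto simp: e_def)
  define c where "c i = norm (T (e i))" for i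
  have c1: "c i \<ge> 1" if "i \<in> {1..n}" for i
    using bd e_sp[OF that] e_norm[OF that] by (force simp: c_def)
  define x where "x i = (1 / c i) *\<^sub>R T (e i)" for i
  show ?thesis
  proof (intro exI[of _ x] conjI allI impI ballI)
    fix i assume i: "i \<in> {1..n}"
    show "norm (x i) = 1" using c1[OF i] by (auto simp: x_def c_def)
  next
    fix \<epsilon> :: "nat \<Rightarrow> real" assume sg: "\<forall>i\<in>{1..n}. \<epsilon> i = 1 \<or> \<epsilon> i = -1"
    define f where "f i = (\<lambda>k. (\<epsilon> i / c i) * e i k)" for i
    define y where "y = (\<lambda>k. \<Sum>i\<in>{1..n}. f i k)"
    have fsp: "\<forall>i\<in>{1..n}. f i \<in> linf_space n"
      using e_sp sp_mul unfolding f_def by blast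
    from Tsum[OF _ fsp] have ysp: "y \<in> linf_space n" and Ty: "T y = (\<Sum>i\<in>{1..n}. T (f i))"
      by (auto simp: y_def)
    have "T y = (\<Sum>i=1..n. \<epsilon> i *\<^sub>R x i)"
      unfolding Ty
    proof (intro sum.cong refl)
      fix i assume i: "i \<in> {1..n}"
      have "T (f i) = (\<epsilon> i / c i) *\<^sub>R T (e i)"
        unfolding f_def using hom[rule_format, OF e_sp[OF i], of "\<epsilon> i / c i"] by simp
      then show "T (f i) = \<epsilon> i *\<^sub>R x i" by (simp add: x_def)
    qed
    moreover have "linf_norm n y \<le> 1"
      unfolding linf_norm_def
    proof (rule Max.boundedI)
      show "(\<lambda>i. \<bar>y i\<bar>) ` {1..n} \<noteq> {}" using n1 by auto
    next
      fix a assume "a \<in> (\<lambda>i. \<bar>y i\<bar>) ` {1..n}"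
      then obtain k where k: "k \<in> {1..n}" "a = \<bar>y k\<bar>" by auto
      have "y k = (\<Sum>i\<in>{1..n}. if k = i then \<epsilon> i / c i else 0)"
        unfolding y_def f_def e_def by (intro sum.cong) auto
      also have "\<dots> = \<epsilon> k / c k" using k(1) by (simp add: sum.delta sum.delta')
      finally have yk: "y k = \<epsilon> k / c k" .
      have "\<epsilon> k = 1 \<or> \<epsilon> k = -1" using sg k(1) by blast
      then have "\<bar>y k\<bar> = 1 / c k" using yk c1[OF k(1)] by auto
      then show "a \<le> 1" using k c1[OF k(1)] by simp
    qed simp
    ultimately have "norm (\<Sum>i=1..n. \<epsilon> i *\<^sub>R x i) \<le> lam"
    proof -
      assume TY: "T y = (\<Sum>i=1..n. \<epsilon> i *\<^sub>R x i)" and L: "linf_norm n y \<le> 1"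
      have "norm (T y) \<le> lam * linf_norm n y" using bd ysp by blast
      also have "\<dots> \<le> lam * 1" using L \<rho>0 by (intro mult_left_mono) (auto simp: lam_def)
      finally show ?thesis using TY by simp
    qed
    then show "norm (\<Sum>i=1..n. \<epsilon> i *\<^sub>R x i) < 1 + \<rho>" using \<rho>0 by (simp add: lam_def)
  qed
qed


lemma adm_sq: "admissible_phi (\<lambda>t. t\<^sup>2)"
  unfolding admissible_phi_def
proof (intro conjI allI impI)
  show "convex_on {0..} (\<lambda>t::real. t\<^sup>2)"
    by (rule convex_on_subset[OF convex_power2]) auto
  show "mono_on {0..} (\<lambda>t::real. t\<^sup>2)"
    by (auto intro!: mono_onI power_mono)
next
  fix s t :: real assume "s \<noteq> t"
  then have "0 < (s - t)\<^sup>2" by simp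
  then show "((s + t) / 2)\<^sup>2 < (s\<^sup>2 + t\<^sup>2) / 2"
    by (simp add: power2_eq_square field_simps)
qed simp

context
  fixes \<phi> :: "real \<Rightarrow> real"
  assumes adm: "admissible_phi \<phi>"
begin

lemma phi_mono: "0 \<le> s \<Longrightarrow> s \<le> t \<Longrightarrow> \<phi> s \<le> \<phi> t"
  using adm unfolding admissible_phi_def by (auto intro: mono_onD)

lemma phi_conv: "convex_on {0..} \<phi>"
  and phi0: "\<phi> 0 = 0"
  and phi_strict: "\<And>s t. 0 \<le> s \<Longrightarrow> 0 \<le> t \<Longrightarrow> s \<noteq> t \<Longrightarrow> \<phi> ((s + t) / 2) < (\<phi> s + \<phi> t) / 2"
  using adm unfolding admissible_phi_def by (auto dest: mono_onD)

lemma phi_nonneg: "0 \<le> t \<Longrightarrow> 0 \<le> \<phi> t"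
  using phi_mono[of 0 t] phi0 by simp

lemma phi_meas: "(\<lambda>t. \<phi> (max t 0)) \<in> borel_measurable borel"
  by (rule borel_measurable_mono) (auto intro!: monoI phi_mono)

lemma phi_cont1: "e > 0 \<Longrightarrow> \<exists>d>0. \<phi> (1 + d) < \<phi> 1 + e"
proof -
  assume e: "e > 0"
  have "convex_on {0<..} \<phi>" by (rule convex_on_subset[OF phi_conv]) auto
  then have "continuous_on {0<..} \<phi>" by (intro convex_on_continuous) auto
  then have "isCont \<phi> 1" by (subst (asm) continuous_on_eq_continuous_at) auto
  then obtain d where d: "d > 0" "\<And>y. dist y 1 < d \<Longrightarrow> dist (\<phi> y) (\<phi> 1) < e"
    using e \<open>isCont \<phi> 1\<close> unfolding continuous_at_eps_delta by blast
  have "dist (1 + d/2) 1 < d" using d(1) by (simp add: dist_real_def)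
  then have "\<bar>\<phi> (1 + d/2) - \<phi> 1\<bar> < e" using d(2) by (simp add: dist_real_def)
  then show ?thesis using d(1) by (intro exI[of _ "d/2"]) auto
qed

lemma phi_mid: "0 \<le> a \<Longrightarrow> 0 \<le> b \<Longrightarrow> a + b \<ge> 2 \<Longrightarrow> \<phi> 1 \<le> (\<phi> a + \<phi> b) / 2"
proof -
  assume a: "0 \<le> a" "0 \<le> b" "a + b \<ge> 2"
  have "\<phi> 1 \<le> \<phi> ((1 - 1/2) *\<^sub>R a + (1/2) *\<^sub>R b)"
    using a by (intro phi_mono) auto
  also have "\<dots> \<le> (1 - 1/2) * \<phi> a + (1/2) * \<phi> b"
    using a by (intro convex_onD[OF phi_conv]) auto
  finally show ?thesis by simp
qed

lemma phi_gap_pos: "0 < c \<Longrightarrow> c \<le> 1 \<Longrightarrow> \<phi> 1 < (\<phi> (1 + c) + \<phi> (1 - c)) / 2"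
  using phi_strict[of "1 + c" "1 - c"] by simp

lemma phi_gap: 
  assumes c: "0 < c" "c < 1" and ab: "a \<ge> 1 + c" "b \<ge> 0" "a + b \<ge> 2"
  shows "(\<phi> (1 + c) + \<phi> (1 - c)) / 2 \<le> (\<phi> a + \<phi> b) / 2"
proof (cases "b \<ge> 1 - c")
  case True
  then show ?thesis using phi_mono[of "1 + c" a] phi_mono[of "1 - c" b] c ab by simp
next
  case False
  define l where "l = (1 - b + c) / (2 - 2 * b)"
  have bl: "b < 1" using False c by simp
  have l0: "0 \<le> l" "l \<le> 1" using bl c False by (auto simp: l_def field_simps)
  have ll: "l * (2 - 2 * b) = 1 - b + c" using bl by (simp add: l_def)
  have e1: "1 - c = (1 - l) * (2 - b) + l * b" using ll by (simp add: algebra_simps)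
  have e2: "1 + c = (1 - l) * b + l * (2 - b)" using ll by (simp add: algebra_simps)
  have "\<phi> (1 - c) \<le> (1 - l) * \<phi> (2 - b) + l * \<phi> b"
    using convex_onD[OF phi_conv, of l "2 - b" b] l0 bl ab e1 by simp
  moreover have "\<phi> (1 + c) \<le> (1 - l) * \<phi> b + l * \<phi> (2 - b)"
    using convex_onD[OF phi_conv, of l b "2 - b"] l0 bl ab e2 by simp
  moreover have "\<phi> (2 - b) \<le> \<phi> a" using ab bl by (intro phi_mono) auto
  ultimately show ?thesis by (simp add: algebra_simps)
qed

end

lemma Hmeas:
  fixes x :: "nat \<Rightarrow> 'a::real_normed_vector" and I :: "nat set" and c :: 'a
  shows "(\<lambda>y. norm (c + (\<Sum>i\<in>I. y i *\<^sub>R x i))) \<in> borel_measurable (PiM I (\<lambda>_. borel))"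
proof -
  define H' where "H' z = norm (c + (\<Sum>i\<in>I. z i *\<^sub>R x i))" for z :: "nat \<Rightarrow> real"
  have "continuous_on UNIV H'" unfolding H'_def
    by (intro continuous_intros continuous_on_product_coordinates)
  then have H'b: "H' \<in> borel_measurable borel" by (rule borel_measurable_continuous_onI)
  have H'p: "H' \<in> borel_measurable (PiM UNIV (\<lambda>_::nat. borel::real measure))"
  proof -
    have S: "sets (PiM UNIV (\<lambda>_::nat. borel::real measure)) = sets (borel :: (nat \<Rightarrow> real) measure)"
      by (rule sets_PiM_equal_borel)
    have "measurable (PiM UNIV (\<lambda>_::nat. borel::real measure)) (borel::real measure) = measurable borel borel"
      by (rule measurable_cong_sets[OF S refl])
    then show ?thesis using H'b by simp
  qed
  have Em: "(\<lambda>y i. if i \<in> I then y i else (0::real)) \<in> measurable (PiM I (\<lambda>_. borel)) (PiM UNIV (\<lambda>_::nat. borel::real measure))"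
  proof (rule measurable_PiM_single')
    fix i :: nat
    show "(\<lambda>y. if i \<in> I then y i else (0::real)) \<in> borel_measurable (PiM I (\<lambda>_. borel))"
      by (cases "i \<in> I") auto
  qed auto
  have eq: "(\<lambda>y. norm (c + (\<Sum>i\<in>I. y i *\<^sub>R x i))) = (\<lambda>y. H' (\<lambda>i. if i \<in> I then y i else 0))"
    unfolding H'_def by (intro ext arg_cong[where f=norm] arg_cong[where f="\<lambda>v. c + v"] sum.cong) auto
  show ?thesis unfolding eq using measurable_compose[OF Em H'p] by simp
qed

locale rsetup = prob_space M for M :: "'b measure" +
  fixes r :: "nat \<Rightarrow> 'b \<Rightarrow> real" and n :: nat
  assumes meas: "\<And>i. i \<ge> 1 \<Longrightarrow> r i \<in> borel_measurable M"
    and ind: "indep_vars (\<lambda>_. borel) r {1..}"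
    and sym: "\<And>i. i \<ge> 1 \<Longrightarrow> distr M borel (r i) = distr M borel (\<lambda>\<omega>. - r i \<omega>)"
    and ess: "\<And>i. i \<ge> 1 \<Longrightarrow> esssup M (\<lambda>\<omega>. ereal \<bar>r i \<omega>\<bar>) = 1"
    and n2: "n \<ge> 2"
begin

lemma bnd: "i \<ge> 1 \<Longrightarrow> AE \<omega> in M. \<bar>r i \<omega>\<bar> \<le> 1"
  using esssup_AE[where M=M and f="\<lambda>\<omega>. ereal \<bar>r i \<omega>\<bar>"] ess[of i] by simp

lemma bnd_all: "AE \<omega> in M. \<forall>i\<in>{2..n}. \<bar>r i \<omega>\<bar> \<le> 1"
  by (rule AE_finite_allI) (auto intro: bnd)

lemma pos_prob:
  assumes "\<delta> > 0" "i \<ge> 1"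
  shows "prob (r i -` ball 1 \<delta> \<inter> space M) > 0" "prob (r i -` ball (-1) \<delta> \<inter> space M) > 0"
proof -
  have rm[measurable]: "r i \<in> borel_measurable M" using meas assms by auto
  have eqm: "prob (r i -` ball (-1) \<delta> \<inter> space M) = prob (r i -` ball 1 \<delta> \<inter> space M)"
  proof -
    have "prob (r i -` ball (-1) \<delta> \<inter> space M) = measure (distr M borel (r i)) (ball (-1) \<delta>)"
      by (simp add: measure_distr)
    also have "\<dots> = measure (distr M borel (\<lambda>\<omega>. - r i \<omega>)) (ball (-1) \<delta>)"
      using sym assms by simp
    also have "\<dots> = prob ((\<lambda>\<omega>. - r i \<omega>) -` ball (-1) \<delta> \<inter> space M)"
      by (simp add: measure_distr)
    also have "(\<lambda>\<omega>. - r i \<omega>) -` ball (-1) \<delta> = r i -` ball 1 \<delta>"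
      by (auto simp: dist_real_def)
    finally show ?thesis .
  qed
  have "emeasure M {\<omega> \<in> space M. ereal \<bar>r i \<omega>\<bar> > ereal (1 - \<delta>)} > 0"
    using ess[of i] assms by (intro esssup_pos_measure) auto
  then have S: "prob {\<omega> \<in> space M. \<bar>r i \<omega>\<bar> > 1 - \<delta>} > 0"
    by (simp add: emeasure_eq_measure)
  have N: "prob {\<omega> \<in> space M. \<bar>r i \<omega>\<bar> > 1} = 0"
  proof -
    have "emeasure M {\<omega> \<in> space M. \<bar>r i \<omega>\<bar> > 1} = 0"
      using bnd[of i] assms by (intro emeasure_eq_0_AE) (auto elim!: AE_mp)
    then show ?thesis by (simp add: emeasure_eq_measure)
  qed
  define B1 where "B1 = r i -` ball 1 \<delta> \<inter> space M"
  define B2 where "B2 = r i -` ball (-1) \<delta> \<inter> space M"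
  define B3 where "B3 = {\<omega> \<in> space M. \<bar>r i \<omega>\<bar> > 1}"
  have sets: "B1 \<in> sets M" "B2 \<in> sets M" "B3 \<in> sets M" unfolding B1_def B2_def B3_def by measurable
  have "{\<omega> \<in> space M. \<bar>r i \<omega>\<bar> > 1 - \<delta>} \<subseteq> (B1 \<union> B2) \<union> B3"
    unfolding B1_def B2_def B3_def by (auto simp: dist_real_def)
  then have "prob {\<omega> \<in> space M. \<bar>r i \<omega>\<bar> > 1 - \<delta>} \<le> prob ((B1 \<union> B2) \<union> B3)"
    using sets by (intro finite_measure_mono) auto
  also have "\<dots> \<le> prob (B1 \<union> B2) + prob B3" using sets by (intro measure_Un_le) auto
  also have "\<dots> \<le> prob B1 + prob B2 + prob B3" using sets measure_Un_le[of B1 M B2] by simp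
  finally have "0 < prob B1 + prob B2 + prob B3" using S by simp
  then show "prob (r i -` ball 1 \<delta> \<inter> space M) > 0" using eqm N unfolding B1_def B2_def B3_def by simp
  then show "prob (r i -` ball (-1) \<delta> \<inter> space M) > 0" using eqm by simp
qed

lemma flip:
  fixes g :: "(nat \<Rightarrow> real) \<Rightarrow> real"
  assumes g: "g \<in> borel_measurable (PiM {2..n} (\<lambda>_. borel))"
  shows "integral\<^sup>L M (\<lambda>\<omega>. g (\<lambda>i\<in>{2..n}. r i \<omega>)) = integral\<^sup>L M (\<lambda>\<omega>. g (\<lambda>i\<in>{2..n}. - r i \<omega>))"
proof -
  let ?I = "{2..n::nat}"
  have ne: "?I \<noteq> {}" using n2 by auto
  have rm: "\<And>i. i \<in> ?I \<Longrightarrow> random_variable borel (r i)" using meas by auto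
  have rm': "\<And>i. i \<in> ?I \<Longrightarrow> random_variable borel (\<lambda>\<omega>. - r i \<omega>)" using meas by auto
  have indI: "indep_vars (\<lambda>_. borel) r ?I" by (rule indep_vars_subset[OF ind]) auto
  have indI': "indep_vars (\<lambda>_. borel) (\<lambda>i \<omega>. - r i \<omega>) ?I"
    by (rule indep_vars_compose2[OF indI, where Y="\<lambda>i. uminus"]) auto
  have d1: "distr M (PiM ?I (\<lambda>_. borel)) (\<lambda>\<omega>. \<lambda>i\<in>?I. r i \<omega>) = PiM ?I (\<lambda>i. distr M borel (r i))"
    using indep_vars_iff_distr_eq_PiM'[OF ne rm] indI by simp
  have d2: "distr M (PiM ?I (\<lambda>_. borel)) (\<lambda>\<omega>. \<lambda>i\<in>?I. - r i \<omega>) = PiM ?I (\<lambda>i. distr M borel (\<lambda>\<omega>. - r i \<omega>))"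
    using indep_vars_iff_distr_eq_PiM'[OF ne rm'] indI' by simp
  have d3: "PiM ?I (\<lambda>i. distr M borel (\<lambda>\<omega>. - r i \<omega>)) = PiM ?I (\<lambda>i. distr M borel (r i))"
    using sym by (intro PiM_cong) auto
  have m1: "(\<lambda>\<omega>. \<lambda>i\<in>?I. r i \<omega>) \<in> measurable M (PiM ?I (\<lambda>_. borel))"
    using rm by (intro measurable_restrict) auto
  have m2: "(\<lambda>\<omega>. \<lambda>i\<in>?I. - r i \<omega>) \<in> measurable M (PiM ?I (\<lambda>_. borel))"
    using rm' by (intro measurable_restrict) auto
  have "integral\<^sup>L M (\<lambda>\<omega>. g (\<lambda>i\<in>?I. r i \<omega>)) = integral\<^sup>L (distr M (PiM ?I (\<lambda>_. borel)) (\<lambda>\<omega>. \<lambda>i\<in>?I. r i \<omega>)) g"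
    using integral_distr[OF m1 g] by simp
  also have "\<dots> = integral\<^sup>L (distr M (PiM ?I (\<lambda>_. borel)) (\<lambda>\<omega>. \<lambda>i\<in>?I. - r i \<omega>)) g"
    unfolding d1 d2 d3 ..
  also have "\<dots> = integral\<^sup>L M (\<lambda>\<omega>. g (\<lambda>i\<in>?I. - r i \<omega>))"
    using integral_distr[OF m2 g] by simp
  finally show ?thesis .
qed


definition "dl \<rho> = \<rho> / (2 * real n)"
definition "cc \<rho> = min (\<rho> / 2) (1 / 2 :: real)"
definition "mm \<phi> \<rho> = (\<phi> (1 + cc \<rho>) + \<phi> (1 - cc \<rho>)) / 2 - \<phi> (1::real)"
definition "pp \<rho> = (\<Prod>i\<in>{2..n}. min (prob (r i -` ball 1 (dl \<rho>) \<inter> space M)) (prob (r i -` ball (-1) (dl \<rho>) \<inter> space M)))"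

lemma pp_pos: "\<rho> > 0 \<Longrightarrow> pp \<rho> > 0"
  unfolding pp_def using n2 pos_prob[of "dl \<rho>"] by (intro prod_pos) (auto simp: dl_def)

lemma mm_pos: "admissible_phi \<phi> \<Longrightarrow> \<rho> > 0 \<Longrightarrow> mm \<phi> \<rho> > 0"
  unfolding mm_def using phi_gap_pos[of \<phi> "cc \<rho>"] by (auto simp: cc_def)

lemma integ:
  fixes x :: "nat \<Rightarrow> 'a::real_normed_vector" and s :: real
  assumes adm: "admissible_phi \<phi>" and unit: "\<forall>i\<in>{1..n}. norm (x i) = 1"
  shows "(\<lambda>\<omega>. \<phi> (norm (x 1 + (\<Sum>i=2..n. (s * r i \<omega>) *\<^sub>R x i)))) \<in> borel_measurable M" (is ?A)
    and "\<bar>s\<bar> = 1 \<Longrightarrow> integrable M (\<lambda>\<omega>. \<phi> (norm (x 1 + (\<Sum>i=2..n. (s * r i \<omega>) *\<^sub>R x i))))"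
proof -
  have R: "(\<lambda>\<omega>. \<lambda>i\<in>{2..n}. s * r i \<omega>) \<in> measurable M (PiM {2..n} (\<lambda>_. borel))"
    using meas by (intro measurable_restrict) auto
  have eqn: "(\<lambda>\<omega>. norm (x 1 + (\<Sum>i=2..n. (s * r i \<omega>) *\<^sub>R x i))) =
     (\<lambda>\<omega>. norm (x 1 + (\<Sum>i\<in>{2..n}. (\<lambda>i\<in>{2..n}. s * r i \<omega>) i *\<^sub>R x i)))"
    by (intro ext arg_cong[where f=norm] arg_cong[where f="\<lambda>v. x 1 + v"] sum.cong) auto
  have N: "(\<lambda>\<omega>. norm (x 1 + (\<Sum>i=2..n. (s * r i \<omega>) *\<^sub>R x i))) \<in> borel_measurable M"
    unfolding eqn using measurable_compose[OF R Hmeas[where x=x and I="{2..n}" and c="x 1"]] by simp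
  have eq: "(\<lambda>\<omega>. \<phi> (norm (x 1 + (\<Sum>i=2..n. (s * r i \<omega>) *\<^sub>R x i)))) =
     (\<lambda>\<omega>. (\<lambda>t. \<phi> (max t 0)) (norm (x 1 + (\<Sum>i=2..n. (s * r i \<omega>) *\<^sub>R x i))))" by simp
  show ?A unfolding eq by (rule measurable_compose[OF N phi_meas[OF adm]])
  assume s: "\<bar>s\<bar> = 1"
  show "integrable M (\<lambda>\<omega>. \<phi> (norm (x 1 + (\<Sum>i=2..n. (s * r i \<omega>) *\<^sub>R x i))))"
  proof (rule integrable_const_bound[where B="\<phi> (real n)"])
    show "AE \<omega> in M. norm (\<phi> (norm (x 1 + (\<Sum>i=2..n. (s * r i \<omega>) *\<^sub>R x i)))) \<le> \<phi> (real n)"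
      using bnd_all
    proof (rule AE_mp, intro AE_I2 impI)
      fix \<omega> assume b: "\<forall>i\<in>{2..n}. \<bar>r i \<omega>\<bar> \<le> 1"
      have x1: "norm (x 1) = 1" using unit n2 by auto
      have "norm (x 1 + (\<Sum>i=2..n. (s * r i \<omega>) *\<^sub>R x i)) \<le> norm (x 1) + norm (\<Sum>i=2..n. (s * r i \<omega>) *\<^sub>R x i)"
        by (rule norm_triangle_ineq)
      also have "norm (\<Sum>i=2..n. (s * r i \<omega>) *\<^sub>R x i) \<le> (\<Sum>i=2..n. norm ((s * r i \<omega>) *\<^sub>R x i))"
        by (rule norm_sum)
      also have "(\<Sum>i=2..n. norm ((s * r i \<omega>) *\<^sub>R x i)) \<le> (\<Sum>i=2..n. 1)"
        using b unit s by (intro sum_mono) (auto simp: abs_mult)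
      also have "(\<Sum>i=2..n. (1::real)) = real n - 1" using n2 by simp
      finally have le: "norm (x 1 + (\<Sum>i=2..n. (s * r i \<omega>) *\<^sub>R x i)) \<le> real n" using x1 by simp
      have "\<phi> (norm (x 1 + (\<Sum>i=2..n. (s * r i \<omega>) *\<^sub>R x i))) \<le> \<phi> (real n)"
        by (rule phi_mono[OF adm _ le]) simp
      then show "norm (\<phi> (norm (x 1 + (\<Sum>i=2..n. (s * r i \<omega>) *\<^sub>R x i)))) \<le> \<phi> (real n)"
        using phi_nonneg[OF adm, of "norm (x 1 + (\<Sum>i=2..n. (s * r i \<omega>) *\<^sub>R x i))"] by simp
    qed
  qed fact
qed


lemma lower:
  fixes x :: "nat \<Rightarrow> 'a::real_normed_vector"
  assumes adm: "admissible_phi \<phi>" and \<rho>: "\<rho> > 0"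
    and unit: "\<forall>i\<in>{1..n}. norm (x i) = 1"
    and \<eta>: "\<forall>i\<in>{2..n}. \<eta> i = 1 \<or> \<eta> i = -1"
    and big: "1 + \<rho> \<le> norm (x 1 + (\<Sum>i=2..n. \<eta> i *\<^sub>R x i))"
  shows "\<phi> 1 + mm \<phi> \<rho> * pp \<rho> \<le> integral\<^sup>L M (\<lambda>\<omega>. \<phi> (norm (x 1 + (\<Sum>i=2..n. r i \<omega> *\<^sub>R x i))))"
proof -
  let ?I = "{2..n}"
  define \<delta> where "\<delta> = dl \<rho>"
  define f1 where "f1 = (\<lambda>\<omega>. \<phi> (norm (x 1 + (\<Sum>i=2..n. r i \<omega> *\<^sub>R x i))))"
  define f2 where "f2 = (\<lambda>\<omega>. \<phi> (norm (x 1 + (\<Sum>i=2..n. (- r i \<omega>) *\<^sub>R x i))))"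
  have int1: "integrable M f1" using integ(2)[OF adm unit, of 1] by (simp add: f1_def)
  have int2: "integrable M f2" using integ(2)[OF adm unit, of "-1"] by (simp add: f2_def)
  define g where "g y = \<phi> (max (norm (x 1 + (\<Sum>i\<in>?I. y i *\<^sub>R x i))) 0)" for y :: "nat \<Rightarrow> real"
  have gm: "g \<in> borel_measurable (PiM ?I (\<lambda>_. borel))"
    unfolding g_def by (rule measurable_compose[OF Hmeas phi_meas[OF adm]])
  have gr1: "g (\<lambda>i\<in>?I. r i \<omega>) = f1 \<omega>" for \<omega>
  proof -
    have "(\<Sum>i\<in>?I. (\<lambda>i\<in>?I. r i \<omega>) i *\<^sub>R x i) = (\<Sum>i=2..n. r i \<omega> *\<^sub>R x i)" by (rule sum.cong) auto
    then show ?thesis unfolding g_def f1_def by simp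
  qed
  have gr2: "g (\<lambda>i\<in>?I. - r i \<omega>) = f2 \<omega>" for \<omega>
  proof -
    have "(\<Sum>i\<in>?I. (\<lambda>i\<in>?I. - r i \<omega>) i *\<^sub>R x i) = (\<Sum>i=2..n. (- r i \<omega>) *\<^sub>R x i)" by (rule sum.cong) auto
    then show ?thesis unfolding g_def f2_def by simp
  qed
  have "integral\<^sup>L M f1 = integral\<^sup>L M (\<lambda>\<omega>. g (\<lambda>i\<in>?I. r i \<omega>))"
    unfolding gr1 ..
  also have "\<dots> = integral\<^sup>L M (\<lambda>\<omega>. g (\<lambda>i\<in>?I. - r i \<omega>))" by (rule flip[OF gm])
  also have "\<dots> = integral\<^sup>L M f2"
    unfolding gr2 ..
  finally have E12: "integral\<^sup>L M f1 = integral\<^sup>L M f2" .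
  define A where "A = (\<Inter>i\<in>?I. r i -` ball (\<eta> i) \<delta> \<inter> space M)"
  have rm[measurable]: "r i \<in> borel_measurable M" if "i \<in> ?I" for i using meas that by auto
  have Asets: "A \<in> sets M" unfolding A_def using n2 by (intro sets.finite_INT) auto
  have "prob A = (\<Prod>i\<in>?I. prob (r i -` ball (\<eta> i) \<delta> \<inter> space M))"
    unfolding A_def using n2 by (intro indep_varsD[OF ind]) auto
  also have "\<dots> \<ge> pp \<rho>"
    unfolding pp_def \<delta>_def[symmetric]
  proof (rule prod_mono)
    fix i assume i: "i \<in> ?I"
    show "0 \<le> min (prob (r i -` ball 1 \<delta> \<inter> space M)) (prob (r i -` ball (- 1) \<delta> \<inter> space M)) \<and>
      min (prob (r i -` ball 1 \<delta> \<inter> space M)) (prob (r i -` ball (- 1) \<delta> \<inter> space M))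
        \<le> prob (r i -` ball (\<eta> i) \<delta> \<inter> space M)"
    proof
      show "0 \<le> min (prob (r i -` ball 1 \<delta> \<inter> space M)) (prob (r i -` ball (- 1) \<delta> \<inter> space M))" by simp
      have "\<eta> i = 1 \<or> \<eta> i = -1" using \<eta> i by blast
      then show "min (prob (r i -` ball 1 \<delta> \<inter> space M)) (prob (r i -` ball (- 1) \<delta> \<inter> space M))
        \<le> prob (r i -` ball (\<eta> i) \<delta> \<inter> space M)" by (elim disjE) simp_all
    qed
  qed
  finally have pA: "pp \<rho> \<le> prob A" .
  have c: "0 < cc \<rho>" "cc \<rho> < 1" using \<rho> by (auto simp: cc_def)
  have pw: "\<phi> 1 + mm \<phi> \<rho> * indicator A \<omega> \<le> (f1 \<omega> + f2 \<omega>) / 2" if \<omega>: "\<omega> \<in> space M" for \<omega>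
  proof -
    define v where "v = (\<Sum>i=2..n. r i \<omega> *\<^sub>R x i)"
    have f2v: "(\<Sum>i=2..n. (- r i \<omega>) *\<^sub>R x i) = - v" unfolding v_def by (simp add: sum_negf)
    define a where "a = norm (x 1 + v)"
    define b where "b = norm (x 1 - v)"
    have f12: "f1 \<omega> = \<phi> a" "f2 \<omega> = \<phi> b" unfolding f1_def f2_def a_def b_def v_def f2v[unfolded v_def]
      by simp_all
    have x1: "norm (x 1) = 1" using unit n2 by auto
    have "2 = norm ((x 1 + v) + (x 1 - v))" using x1 by (simp add: scaleR_2[symmetric])
    also have "\<dots> \<le> a + b" unfolding a_def b_def by (rule norm_triangle_ineq)
    finally have ab: "a + b \<ge> 2" .
    have a0: "a \<ge> 0" "b \<ge> 0" unfolding a_def b_def by simp_all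
    show ?thesis
    proof (cases "\<omega> \<in> A")
      case True
      then have close: "\<bar>\<eta> i - r i \<omega>\<bar> < \<delta>" if "i \<in> ?I" for i
        using that by (auto simp: A_def dist_real_def)
      have "norm (\<Sum>i=2..n. (\<eta> i - r i \<omega>) *\<^sub>R x i) \<le> (\<Sum>i=2..n. norm ((\<eta> i - r i \<omega>) *\<^sub>R x i))"
        by (rule norm_sum)
      also have "\<dots> \<le> (\<Sum>i=2..n. \<delta>)"
        using close unit by (intro sum_mono) (auto intro: less_imp_le)
      also have "\<dots> = (real n - 1) * \<delta>" using n2 by simp
      also have "\<dots> \<le> \<rho> / 2"
        using \<rho> n2 by (simp add: \<delta>_def dl_def field_simps)
      finally have small: "norm (\<Sum>i=2..n. (\<eta> i - r i \<omega>) *\<^sub>R x i) \<le> \<rho> / 2" .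
      have "x 1 + (\<Sum>i=2..n. \<eta> i *\<^sub>R x i) = (x 1 + v) + (\<Sum>i=2..n. (\<eta> i - r i \<omega>) *\<^sub>R x i)"
        unfolding v_def by (simp add: scaleR_diff_left sum_subtractf)
      then have "1 + \<rho> \<le> a + \<rho> / 2"
        using big small norm_triangle_ineq[of "x 1 + v" "\<Sum>i=2..n. (\<eta> i - r i \<omega>) *\<^sub>R x i"]
        unfolding a_def by (simp add: add.assoc)
      then have "a \<ge> 1 + cc \<rho>" using \<rho> by (simp add: cc_def)
      from phi_gap[OF adm c this a0(2) ab] show ?thesis
        using True f12 by (simp add: mm_def)
    next
      case False
      show ?thesis using False f12 phi_mid[OF adm a0 ab] by simp
    qed
  qed
  have "integral\<^sup>L M f1 = integral\<^sup>L M (\<lambda>\<omega>. (f1 \<omega> + f2 \<omega>) / 2)"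
    using E12 int1 int2 by simp
  also have "\<dots> \<ge> integral\<^sup>L M (\<lambda>\<omega>. \<phi> 1 + mm \<phi> \<rho> * indicator A \<omega>)"
  proof (rule integral_mono)
    show "integrable M (\<lambda>\<omega>. \<phi> 1 + mm \<phi> \<rho> * indicator A \<omega>)"
      using Asets by (intro Bochner_Integration.integrable_add integrable_const integrable_mult_right integrable_real_indicator) (auto simp: emeasure_eq_measure)
  qed (use pw int1 int2 in auto)
  also have "integral\<^sup>L M (\<lambda>\<omega>. \<phi> 1 + mm \<phi> \<rho> * indicator A \<omega>) = \<phi> 1 + mm \<phi> \<rho> * prob A"
  proof -
    have ii: "integrable M (indicator A :: 'b \<Rightarrow> real)" using Asets by (auto simp: emeasure_eq_measure)
    have "integral\<^sup>L M (\<lambda>\<omega>. \<phi> 1 + mm \<phi> \<rho> * indicator A \<omega>) = integral\<^sup>L M (\<lambda>\<omega>. \<phi> 1) + integral\<^sup>L M (\<lambda>\<omega>. mm \<phi> \<rho> * indicator A \<omega>)"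
      using ii by (intro Bochner_Integration.integral_add) auto
    also have "integral\<^sup>L M (\<lambda>\<omega>. \<phi> 1) = \<phi> 1" by (simp add: prob_space)
    also have "integral\<^sup>L M (\<lambda>\<omega>. mm \<phi> \<rho> * indicator A \<omega>) = mm \<phi> \<rho> * integral\<^sup>L M (indicator A)"
      by (rule integral_mult_right_zero)
    also have "integral\<^sup>L M (indicator A :: 'b \<Rightarrow> real) = prob A"
      using Asets sets.sets_into_space[OF Asets] by (simp add: Int_absorb2)
    finally show ?thesis .
  qed
  finally have "\<phi> 1 + mm \<phi> \<rho> * prob A \<le> integral\<^sup>L M f1" .
  moreover have "mm \<phi> \<rho> * pp \<rho> \<le> mm \<phi> \<rho> * prob A"
    using pA mm_pos[OF adm \<rho>] by simp
  ultimately show ?thesis unfolding f1_def by simp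
qed


lemma upper:
  fixes x :: "nat \<Rightarrow> 'a::real_normed_vector"
  assumes adm: "admissible_phi \<phi>" and unit: "\<forall>i\<in>{1..n}. norm (x i) = 1"
    and H: "\<forall>\<epsilon>. (\<forall>i\<in>{2..n}. \<epsilon> i = 1 \<or> \<epsilon> i = -1) \<longrightarrow> norm (x 1 + (\<Sum>i\<in>{2..n}. \<epsilon> i *\<^sub>R x i)) \<le> B"
  shows "integral\<^sup>L M (\<lambda>\<omega>. \<phi> (norm (x 1 + (\<Sum>i=2..n. r i \<omega> *\<^sub>R x i)))) \<le> \<phi> B"
proof -
  have int1: "integrable M (\<lambda>\<omega>. \<phi> (norm (x 1 + (\<Sum>i=2..n. r i \<omega> *\<^sub>R x i))))"
    using integ(2)[OF adm unit, of 1] by simp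
  have "integral\<^sup>L M (\<lambda>\<omega>. \<phi> (norm (x 1 + (\<Sum>i=2..n. r i \<omega> *\<^sub>R x i)))) \<le> integral\<^sup>L M (\<lambda>\<omega>. \<phi> B)"
  proof (rule integral_mono_AE[OF int1])
    show "AE \<omega> in M. \<phi> (norm (x 1 + (\<Sum>i=2..n. r i \<omega> *\<^sub>R x i))) \<le> \<phi> B"
      using bnd_all
    proof (rule AE_mp, intro AE_I2 impI)
      fix \<omega> assume b: "\<forall>i\<in>{2..n}. \<bar>r i \<omega>\<bar> \<le> 1"
      have "norm (x 1 + (\<Sum>i\<in>{2..n}. r i \<omega> *\<^sub>R x i)) \<le> B"
        by (rule cube_bound[OF _ H]) (use b in auto)
      then show "\<phi> (norm (x 1 + (\<Sum>i=2..n. r i \<omega> *\<^sub>R x i))) \<le> \<phi> B"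
        by (intro phi_mono[OF adm]) auto
    qed
  qed auto
  then show ?thesis by (simp add: prob_space)
qed

end

theorem proposition2p2:
  fixes M :: "'b measure" and r :: "nat \<Rightarrow> 'b \<Rightarrow> real" and n :: nat
  assumes "prob_space M"
    and "\<And>i. i \<ge> 1 \<Longrightarrow> r i \<in> borel_measurable M"
    and "prob_space.indep_vars M (\<lambda>_. borel) r {1..}"
    and "\<And>i. i \<ge> 1 \<Longrightarrow> distr M borel (r i) = distr M borel (\<lambda>\<omega>. - r i \<omega>)"
    and "\<And>i. i \<ge> 1 \<Longrightarrow> esssup M (\<lambda>\<omega>. ereal \<bar>r i \<omega>\<bar>) = 1"
    and "n \<ge> 2"
  shows
   "let
      P1 = \<not> linf_representable n TYPE('a::banach);
      P2 = (\<exists>\<rho>>0. \<forall>x :: nat \<Rightarrow> 'a. (\<forall>i\<in>{1..n}. norm (x i) = 1) \<longrightarrow>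
              (\<exists>\<epsilon> :: nat \<Rightarrow> real. (\<forall>i\<in>{1..n}. \<epsilon> i = 1 \<or> \<epsilon> i = -1) \<and>
                  norm (\<Sum>i=1..n. \<epsilon> i *\<^sub>R x i) \<ge> 1 + \<rho>));
      E = (\<lambda>\<phi> (x :: nat \<Rightarrow> 'a). integral\<^sup>L M (\<lambda>\<omega>. \<phi> (norm (x 1 + (\<Sum>i=2..n. r i \<omega> *\<^sub>R x i)))));
      P3 = (\<exists>\<phi>. admissible_phi \<phi> \<and> (\<exists>\<rho>>0. \<forall>x :: nat \<Rightarrow> 'a. (\<forall>i\<in>{1..n}. norm (x i) = 1) \<longrightarrow>
              E \<phi> x \<ge> \<phi> 1 + \<rho>));
      P4 = (\<forall>\<phi>. admissible_phi \<phi> \<longrightarrow> (\<exists>\<rho>>0. \<forall>x :: nat \<Rightarrow> 'a. (\<forall>i\<in>{1..n}. norm (x i) = 1) \<longrightarrow>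
              E \<phi> x \<ge> \<phi> 1 + \<rho>))
    in (P1 \<longleftrightarrow> P2) \<and> (P2 \<longleftrightarrow> P3) \<and> (P3 \<longleftrightarrow> P4)"
proof -
  interpret rsetup M r n
    using assms unfolding rsetup_def rsetup_axioms_def by auto
  have n1: "n \<ge> 1" using assms(6) by simp
  have split: "(\<Sum>i=1..n. f i) = f 1 + (\<Sum>i=2..n. f i)" for f :: "nat \<Rightarrow> 'a"
    using sum.atLeast_Suc_atMost[OF n1, of f] by (simp add: numeral_2_eq_2)
  define P2 where "P2 = (\<exists>\<rho>>0. \<forall>x :: nat \<Rightarrow> 'a. (\<forall>i\<in>{1..n}. norm (x i) = 1) \<longrightarrow>
              (\<exists>\<epsilon> :: nat \<Rightarrow> real. (\<forall>i\<in>{1..n}. \<epsilon> i = 1 \<or> \<epsilon> i = -1) \<and>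
                  norm (\<Sum>i=1..n. \<epsilon> i *\<^sub>R x i) \<ge> 1 + \<rho>))"
  define P3 where "P3 = (\<exists>\<phi>. admissible_phi \<phi> \<and> (\<exists>\<rho>>0. \<forall>x :: nat \<Rightarrow> 'a. (\<forall>i\<in>{1..n}. norm (x i) = 1) \<longrightarrow>
              integral\<^sup>L M (\<lambda>\<omega>. \<phi> (norm (x 1 + (\<Sum>i=2..n. r i \<omega> *\<^sub>R x i)))) \<ge> \<phi> 1 + \<rho>))"
  define P4 where "P4 = (\<forall>\<phi>. admissible_phi \<phi> \<longrightarrow> (\<exists>\<rho>>0. \<forall>x :: nat \<Rightarrow> 'a. (\<forall>i\<in>{1..n}. norm (x i) = 1) \<longrightarrow>
              integral\<^sup>L M (\<lambda>\<omega>. \<phi> (norm (x 1 + (\<Sum>i=2..n. r i \<omega> *\<^sub>R x i)))) \<ge> \<phi> 1 + \<rho>))"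
  have notP2: "\<not> P2 \<longleftrightarrow> (\<forall>\<rho>>0. \<exists>x::nat\<Rightarrow>'a. (\<forall>i\<in>{1..n}. norm (x i) = 1) \<and>
       (\<forall>\<epsilon>. (\<forall>i\<in>{1..n}. \<epsilon> i = 1 \<or> \<epsilon> i = -1) \<longrightarrow> norm (\<Sum>i=1..n. \<epsilon> i *\<^sub>R x i) < 1 + \<rho>))"
    unfolding P2_def not_le[symmetric] by blast
  have A12: "(\<not> linf_representable n TYPE('a)) \<longleftrightarrow> P2"
  proof
    assume "\<not> linf_representable n TYPE('a)"
    then show P2 using repr_of_notP2[OF n1] notP2 by blast
  next
    assume P: P2
    show "\<not> linf_representable n TYPE('a)"
    proof
      assume R: "linf_representable n TYPE('a)"
      from P obtain \<rho> where \<rho>: "\<rho> > 0" and H: "\<forall>x :: nat \<Rightarrow> 'a. (\<forall>i\<in>{1..n}. norm (x i) = 1) \<longrightarrow>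
              (\<exists>\<epsilon> :: nat \<Rightarrow> real. (\<forall>i\<in>{1..n}. \<epsilon> i = 1 \<or> \<epsilon> i = -1) \<and>
                  norm (\<Sum>i=1..n. \<epsilon> i *\<^sub>R x i) \<ge> 1 + \<rho>)" unfolding P2_def by blast
      from notP2_of_repr[OF n1 R \<rho>] obtain x :: "nat \<Rightarrow> 'a" where
        u: "\<forall>i\<in>{1..n}. norm (x i) = 1" and
        s: "\<forall>\<epsilon>. (\<forall>i\<in>{1..n}. \<epsilon> i = 1 \<or> \<epsilon> i = -1) \<longrightarrow> norm (\<Sum>i=1..n. \<epsilon> i *\<^sub>R x i) < 1 + \<rho>"
        by blast
      from H u obtain \<epsilon> where "\<forall>i\<in>{1..n}. \<epsilon> i = 1 \<or> \<epsilon> i = -1" "norm (\<Sum>i=1..n. \<epsilon> i *\<^sub>R x i) \<ge> 1 + \<rho>"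
        by blast
      with s show False by force
    qed
  qed
  have A24: "P2 \<Longrightarrow> P4"
  proof -
    assume P2
    then obtain \<rho> where \<rho>: "\<rho> > 0" and H: "\<forall>x :: nat \<Rightarrow> 'a. (\<forall>i\<in>{1..n}. norm (x i) = 1) \<longrightarrow>
              (\<exists>\<epsilon> :: nat \<Rightarrow> real. (\<forall>i\<in>{1..n}. \<epsilon> i = 1 \<or> \<epsilon> i = -1) \<and>
                  norm (\<Sum>i=1..n. \<epsilon> i *\<^sub>R x i) \<ge> 1 + \<rho>)" unfolding P2_def by blast
    show P4 unfolding P4_def
    proof (intro allI impI)
      fix \<phi> assume adm: "admissible_phi \<phi>"
      show "\<exists>\<rho>>0. \<forall>x :: nat \<Rightarrow> 'a. (\<forall>i\<in>{1..n}. norm (x i) = 1) \<longrightarrow>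
              integral\<^sup>L M (\<lambda>\<omega>. \<phi> (norm (x 1 + (\<Sum>i=2..n. r i \<omega> *\<^sub>R x i)))) \<ge> \<phi> 1 + \<rho>"
      proof (intro exI[of _ "mm \<phi> \<rho> * pp \<rho>"] conjI allI impI)
        show "0 < mm \<phi> \<rho> * pp \<rho>" using mm_pos[OF adm \<rho>] pp_pos[OF \<rho>] by simp
        fix x :: "nat \<Rightarrow> 'a" assume u: "\<forall>i\<in>{1..n}. norm (x i) = 1"
        from H u obtain \<epsilon> where sg: "\<forall>i\<in>{1..n}. \<epsilon> i = 1 \<or> \<epsilon> i = -1"
          and big: "norm (\<Sum>i=1..n. \<epsilon> i *\<^sub>R x i) \<ge> 1 + \<rho>" by blast
        define \<eta> where "\<eta> i = \<epsilon> 1 * \<epsilon> i" for i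
        have e1: "\<epsilon> 1 = 1 \<or> \<epsilon> 1 = -1" using sg n1 by auto
        have \<eta>s: "\<forall>i\<in>{2..n}. \<eta> i = 1 \<or> \<eta> i = -1" using sg e1 by (auto simp: \<eta>_def)
        have sq: "\<epsilon> 1 * \<epsilon> 1 = 1" using e1 by auto
        have "\<epsilon> 1 *\<^sub>R (\<Sum>i=1..n. \<epsilon> i *\<^sub>R x i) = (\<epsilon> 1 * \<epsilon> 1) *\<^sub>R x 1 + (\<Sum>i=2..n. (\<epsilon> 1 * \<epsilon> i) *\<^sub>R x i)"
          unfolding split by (simp add: scaleR_add_right scaleR_sum_right)
        also have "\<dots> = x 1 + (\<Sum>i=2..n. \<eta> i *\<^sub>R x i)" unfolding sq \<eta>_def by simp
        finally have eqv: "\<epsilon> 1 *\<^sub>R (\<Sum>i=1..n. \<epsilon> i *\<^sub>R x i) = x 1 + (\<Sum>i=2..n. \<eta> i *\<^sub>R x i)" .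
        have "norm (\<epsilon> 1 *\<^sub>R (\<Sum>i=1..n. \<epsilon> i *\<^sub>R x i)) = norm (\<Sum>i=1..n. \<epsilon> i *\<^sub>R x i)"
          using e1 by auto
        then have "norm (x 1 + (\<Sum>i=2..n. \<eta> i *\<^sub>R x i)) = norm (\<Sum>i=1..n. \<epsilon> i *\<^sub>R x i)"
          unfolding eqv .
        then show "\<phi> 1 + mm \<phi> \<rho> * pp \<rho> \<le> integral\<^sup>L M (\<lambda>\<omega>. \<phi> (norm (x 1 + (\<Sum>i=2..n. r i \<omega> *\<^sub>R x i))))"
          using lower[OF adm \<rho> u \<eta>s] big by simp
      qed
    qed
  qed
  have A43: "P4 \<Longrightarrow> P3" unfolding P3_def P4_def using adm_sq by blast
  have A32: "P3 \<Longrightarrow> P2"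
  proof (rule ccontr)
    assume P3 "\<not> P2"
    then obtain \<phi> \<rho>0 where adm: "admissible_phi \<phi>" and \<rho>0: "\<rho>0 > 0" and
      H: "\<forall>x :: nat \<Rightarrow> 'a. (\<forall>i\<in>{1..n}. norm (x i) = 1) \<longrightarrow>
              integral\<^sup>L M (\<lambda>\<omega>. \<phi> (norm (x 1 + (\<Sum>i=2..n. r i \<omega> *\<^sub>R x i)))) \<ge> \<phi> 1 + \<rho>0"
      unfolding P3_def by blast
    obtain d where d: "d > 0" "\<phi> (1 + d) < \<phi> 1 + \<rho>0" using phi_cont1[OF adm \<rho>0] by blast
    from \<open>\<not> P2\<close> d(1) obtain x :: "nat \<Rightarrow> 'a" where u: "\<forall>i\<in>{1..n}. norm (x i) = 1" and
      s: "\<forall>\<epsilon>. (\<forall>i\<in>{1..n}. \<epsilon> i = 1 \<or> \<epsilon> i = -1) \<longrightarrow> norm (\<Sum>i=1..n. \<epsilon> i *\<^sub>R x i) < 1 + d"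
      unfolding notP2 by blast
    have s2: "\<forall>\<epsilon>. (\<forall>i\<in>{2..n}. \<epsilon> i = 1 \<or> \<epsilon> i = -1) \<longrightarrow> norm (x 1 + (\<Sum>i\<in>{2..n}. \<epsilon> i *\<^sub>R x i)) \<le> 1 + d"
    proof (intro allI impI)
      fix \<epsilon> :: "nat \<Rightarrow> real" assume e: "\<forall>i\<in>{2..n}. \<epsilon> i = 1 \<or> \<epsilon> i = -1"
      have e': "\<forall>i\<in>{1..n}. (\<epsilon>(1 := 1)) i = 1 \<or> (\<epsilon>(1 := 1)) i = -1"
      proof
        fix i assume "i \<in> {1..n}"
        then show "(\<epsilon>(1 := 1)) i = 1 \<or> (\<epsilon>(1 := 1)) i = -1" using e by (cases "i = 1") auto
      qed
      have "(\<Sum>i\<in>{2..n}. (\<epsilon>(1 := 1)) i *\<^sub>R x i) = (\<Sum>i\<in>{2..n}. \<epsilon> i *\<^sub>R x i)"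
        by (rule sum.cong) auto
      then have "(\<Sum>i=1..n. (\<epsilon>(1 := 1)) i *\<^sub>R x i) = x 1 + (\<Sum>i\<in>{2..n}. \<epsilon> i *\<^sub>R x i)"
        unfolding split by simp
      then show "norm (x 1 + (\<Sum>i\<in>{2..n}. \<epsilon> i *\<^sub>R x i)) \<le> 1 + d"
        using s e' by (metis less_imp_le)
    qed
    have "integral\<^sup>L M (\<lambda>\<omega>. \<phi> (norm (x 1 + (\<Sum>i=2..n. r i \<omega> *\<^sub>R x i)))) \<le> \<phi> (1 + d)"
      by (rule upper[OF adm u s2])
    moreover have "integral\<^sup>L M (\<lambda>\<omega>. \<phi> (norm (x 1 + (\<Sum>i=2..n. r i \<omega> *\<^sub>R x i)))) \<ge> \<phi> 1 + \<rho>0"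
      using H u by blast
    ultimately show False using d(2) by simp
  qed
  have "(\<not> linf_representable n TYPE('a) \<longleftrightarrow> P2) \<and> (P2 \<longleftrightarrow> P3) \<and> (P3 \<longleftrightarrow> P4)"
    using A12 A24 A43 A32 by blast
  then show ?thesis unfolding Let_def P2_def P3_def P4_def .
qed

end
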